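(* Let $k\ge 0$ be an integer and let $T$ be a regular tournament of order $2k+1$ (every vertex has in-degree and out-degree equal to $k$). Then $\Delta(T)=k$. Furthermore, for any ordering $\sigma$ of $V(T)$, if $u$ and $v$ denote respectively the first and the last vertex of $\sigma$, then $d_\sigma(u)=d_\sigma(v)=k$.
   Context: A tournament is a digraph with exactly one arc between each pair of distinct vertices. An ordering $\sigma=\langle v_1,\dots,v_n\rangle$ of $V(T)$ is a linear order of the vertices; an arc $(v_i,v_j)$ is backward in $\sigma$ if $j<i$ and forward otherwise. For a vertex $v$, $d_\sigma(v)$ is the number of backward arcs of $\sigma$ incident to $v$ (as head or tail). $\Delta_\sigma(T)=\max_{v\in V(T)} d_\sigma(v)$, and the degreewidth of $T$ is $\Delta(T)=\min_\sigma \Delta_\sigma(T)$, the minimum over all orderings $\sigma$ of $V(T)$. *)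

theory Defs
  imports Main
begin

definition tournament :: "'a set \<Rightarrow> ('a \<Rightarrow> 'a \<Rightarrow> bool) \<Rightarrow> bool" where
  "tournament V A \<longleftrightarrow> finite V \<and>
     (\<forall>u v. A u v \<longrightarrow> u \<in> V \<and> v \<in> V) \<and>
     (\<forall>v. \<not> A v v) \<and>
     (\<forall>u\<in>V. \<forall>v\<in>V. u \<noteq> v \<longrightarrow> (A u v \<longleftrightarrow> \<not> A v u))"

definition out_degree :: "'a set \<Rightarrow> ('a \<Rightarrow> 'a \<Rightarrow> bool) \<Rightarrow> 'a \<Rightarrow> nat" where
  "out_degree V A v = card {w \<in> V. A v w}"

definition in_degree :: "'a set \<Rightarrow> ('a \<Rightarrow> 'a \<Rightarrow> bool) \<Rightarrow> 'a \<Rightarrow> nat" where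
  "in_degree V A v = card {w \<in> V. A w v}"

definition is_ordering :: "'a set \<Rightarrow> 'a list \<Rightarrow> bool" where
  "is_ordering V \<sigma> \<longleftrightarrow> distinct \<sigma> \<and> set \<sigma> = V"

definition backward :: "('a \<Rightarrow> 'a \<Rightarrow> bool) \<Rightarrow> 'a list \<Rightarrow> 'a \<Rightarrow> 'a \<Rightarrow> bool" where
  "backward A \<sigma> u v \<longleftrightarrow> A u v \<and>
     (\<exists>i j. i < length \<sigma> \<and> j < length \<sigma> \<and> \<sigma> ! i = u \<and> \<sigma> ! j = v \<and> j < i)"

definition back_deg :: "'a set \<Rightarrow> ('a \<Rightarrow> 'a \<Rightarrow> bool) \<Rightarrow> 'a list \<Rightarrow> 'a \<Rightarrow> nat" where
  "back_deg V A \<sigma> v =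
     card {(x, y). x \<in> V \<and> y \<in> V \<and> backward A \<sigma> x y \<and> (x = v \<or> y = v)}"

definition max_back_deg :: "'a set \<Rightarrow> ('a \<Rightarrow> 'a \<Rightarrow> bool) \<Rightarrow> 'a list \<Rightarrow> nat" where
  "max_back_deg V A \<sigma> = Max (back_deg V A \<sigma> ` V)"

definition degreewidth :: "'a set \<Rightarrow> ('a \<Rightarrow> 'a \<Rightarrow> bool) \<Rightarrow> nat" where
  "degreewidth V A = Min {max_back_deg V A \<sigma> | \<sigma>. is_ordering V \<sigma>}"

end

theory Submission
  imports Defs
begin

lemma ordering_props:
  assumes "is_ordering V \<sigma>" "V \<noteq> {}"
  shows "\<sigma> \<noteq> []" "distinct \<sigma>" "set \<sigma> = V"
  using assms unfolding is_ordering_def by auto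

lemma hd_back:
  assumes T: "tournament V A" and o: "is_ordering V \<sigma>" and ne: "V \<noteq> {}"
  shows "back_deg V A \<sigma> (hd \<sigma>) = in_degree V A (hd \<sigma>)"
proof -
  note op = ordering_props[OF o ne]
  let ?h = "hd \<sigma>"
  have h0: "\<sigma> ! 0 = ?h" using op by (simp add: hd_conv_nth)
  have S: "{(x, y). x \<in> V \<and> y \<in> V \<and> backward A \<sigma> x y \<and> (x = ?h \<or> y = ?h)}
      = (\<lambda>x. (x, ?h)) ` {w \<in> V. A w ?h}"
  proof (intro set_eqI iffI)
    fix z assume "z \<in> {(x, y). x \<in> V \<and> y \<in> V \<and> backward A \<sigma> x y \<and> (x = ?h \<or> y = ?h)}"
    then obtain x y where z: "z = (x,y)" "x \<in> V" "y \<in> V" "backward A \<sigma> x y" "x = ?h \<or> y = ?h"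
      by auto
    then have "A x y" unfolding backward_def by simp
    obtain i j where ij: "i < length \<sigma>" "j < length \<sigma>" "\<sigma> ! i = x" "\<sigma> ! j = y" "j < i"
      using z(4) unfolding backward_def by blast
    have "x \<noteq> ?h"
    proof
      assume "x = ?h"
      then have "\<sigma> ! i = \<sigma> ! 0" using ij h0 by simp
      moreover have "0 < length \<sigma>" using op(1) by simp
      ultimately have "i = 0" using nth_eq_iff_index_eq[OF op(2) ij(1)] by blast
      then show False using ij by simp
    qed
    then have "y = ?h" using z by blast
    then show "z \<in> (\<lambda>x. (x, ?h)) ` {w \<in> V. A w ?h}" using z \<open>A x y\<close> by auto
  next
    fix z assume "z \<in> (\<lambda>x. (x, ?h)) ` {w \<in> V. A w ?h}"
    then obtain x where x: "z = (x, ?h)" "x \<in> V" "A x ?h" by auto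
    moreover have "\<not> A ?h ?h" using T unfolding tournament_def by blast
    ultimately have "x \<noteq> ?h" by auto
    obtain i where i: "i < length \<sigma>" "\<sigma> ! i = x" using x op by (metis in_set_conv_nth)
    have "i \<noteq> 0" using i h0 \<open>x \<noteq> ?h\<close> by metis
    have "?h \<in> V" using op by auto
    have "backward A \<sigma> x ?h" unfolding backward_def
      using x i h0 \<open>i \<noteq> 0\<close> by (intro conjI exI[of _ i] exI[of _ 0]) auto
    then show "z \<in> {(x, y). x \<in> V \<and> y \<in> V \<and> backward A \<sigma> x y \<and> (x = ?h \<or> y = ?h)}"
      using x \<open>?h \<in> V\<close> by auto
  qed
  show ?thesis unfolding back_deg_def in_degree_def S
    by (rule card_image) (auto simp: inj_on_def)
qed

lemma last_back:
  assumes T: "tournament V A" and o: "is_ordering V \<sigma>" and ne: "V \<noteq> {}"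
  shows "back_deg V A \<sigma> (last \<sigma>) = out_degree V A (last \<sigma>)"
proof -
  note op = ordering_props[OF o ne]
  let ?h = "last \<sigma>"
  let ?n = "length \<sigma> - 1"
  have h0: "\<sigma> ! ?n = ?h" "?n < length \<sigma>" using op by (auto simp: last_conv_nth)
  have S: "{(x, y). x \<in> V \<and> y \<in> V \<and> backward A \<sigma> x y \<and> (x = ?h \<or> y = ?h)}
      = (\<lambda>y. (?h, y)) ` {w \<in> V. A ?h w}"
  proof (intro set_eqI iffI)
    fix z assume "z \<in> {(x, y). x \<in> V \<and> y \<in> V \<and> backward A \<sigma> x y \<and> (x = ?h \<or> y = ?h)}"
    then obtain x y where z: "z = (x,y)" "x \<in> V" "y \<in> V" "backward A \<sigma> x y" "x = ?h \<or> y = ?h"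
      by auto
    then have "A x y" unfolding backward_def by simp
    obtain i j where ij: "i < length \<sigma>" "j < length \<sigma>" "\<sigma> ! i = x" "\<sigma> ! j = y" "j < i"
      using z(4) unfolding backward_def by blast
    have "y \<noteq> ?h"
    proof
      assume "y = ?h"
      then have "\<sigma> ! j = \<sigma> ! ?n" using ij h0 by simp
      then have "j = ?n" using nth_eq_iff_index_eq[OF op(2) ij(2) h0(2)] by blast
      then show False using ij by simp
    qed
    then have "x = ?h" using z by blast
    then show "z \<in> (\<lambda>y. (?h, y)) ` {w \<in> V. A ?h w}" using z \<open>A x y\<close> by auto
  next
    fix z assume "z \<in> (\<lambda>y. (?h, y)) ` {w \<in> V. A ?h w}"
    then obtain y where x: "z = (?h, y)" "y \<in> V" "A ?h y" by auto
    moreover have "\<not> A ?h ?h" using T unfolding tournament_def by blast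
    ultimately have "y \<noteq> ?h" by auto
    obtain i where i: "i < length \<sigma>" "\<sigma> ! i = y" using x op by (metis in_set_conv_nth)
    have "i \<noteq> ?n" using i h0 \<open>y \<noteq> ?h\<close> by auto
    have "?h \<in> V" using op by auto
    have "backward A \<sigma> ?h y" unfolding backward_def
      using x i h0 \<open>i \<noteq> ?n\<close> by (intro conjI exI[of _ ?n] exI[of _ i]) auto
    then show "z \<in> {(x, y). x \<in> V \<and> y \<in> V \<and> backward A \<sigma> x y \<and> (x = ?h \<or> y = ?h)}"
      using x \<open>?h \<in> V\<close> by auto
  qed
  show ?thesis unfolding back_deg_def out_degree_def S
    by (rule card_image) (auto simp: inj_on_def)
qed

lemma sorted_ordering:
  fixes p :: "'a \<Rightarrow> nat"
  assumes fin: "finite V" and inj: "inj_on p V"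
  shows "\<exists>\<sigma>. is_ordering V \<sigma> \<and>
     (\<forall>x\<in>V. \<forall>y\<in>V. backward A \<sigma> x y \<longleftrightarrow> A x y \<and> p y < p x)"
proof -
  define L where "L = sorted_list_of_set (p ` V)"
  define \<sigma> where "\<sigma> = map (the_inv_into V p) L"
  have L: "sorted_wrt (<) L" "distinct L" "set L = p ` V" using fin by (auto simp: L_def)
  have mp: "map p \<sigma> = L" unfolding \<sigma>_def using L(3) inj
    by (auto simp: map_idI f_the_inv_into_f intro!: map_idI)
  have sV: "set \<sigma> = V" unfolding \<sigma>_def using L(3) the_inv_into_onto[OF inj] by simp
  have dist: "distinct \<sigma>" using L(2) mp by (metis distinct_map)
  have ss: "sorted_wrt (<) (map p \<sigma>)" using mp L(1) by simp
  have lt: "p (\<sigma> ! j) < p (\<sigma> ! i)" if "j < i" "i < length \<sigma>" for i j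
    using sorted_wrt_nth_less[OF ss, of j i] that by simp
  have "backward A \<sigma> x y \<longleftrightarrow> A x y \<and> p y < p x" if "x \<in> V" "y \<in> V" for x y
  proof
    assume "backward A \<sigma> x y"
    then obtain i j where "A x y" "i < length \<sigma>" "j < length \<sigma>" "\<sigma> ! i = x" "\<sigma> ! j = y" "j < i"
      unfolding backward_def by blast
    then show "A x y \<and> p y < p x" using lt[of j i] by simp
  next
    assume a: "A x y \<and> p y < p x"
    have "x \<in> set \<sigma>" "y \<in> set \<sigma>" using that sV by auto
    then obtain i j where i: "i < length \<sigma>" "\<sigma> ! i = x" and j: "j < length \<sigma>" "\<sigma> ! j = y"
      by (auto simp: in_set_conv_nth)
    have "j < i"
    proof (rule ccontr)
      assume "\<not> j < i"
      then have "i = j \<or> i < j" by auto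
      then show False
      proof
        assume "i = j" then show False using i j a by simp
      next
        assume "i < j" then show False using lt[of i j] i j a by simp
      qed
    qed
    then show "backward A \<sigma> x y" unfolding backward_def using a i j by (intro conjI exI[of _ i] exI[of _ j]) auto
  qed
  moreover have "is_ordering V \<sigma>" using sV dist unfolding is_ordering_def by simp
  ultimately show ?thesis by blast
qed

definition bset :: "'a set \<Rightarrow> ('a \<Rightarrow> 'a \<Rightarrow> bool) \<Rightarrow> ('a \<Rightarrow> nat) \<Rightarrow> ('a \<Rightarrow> 'a \<Rightarrow> bool) \<Rightarrow> ('a \<times> 'a) set" where
  "bset V A p P = {(x, y). x \<in> V \<and> y \<in> V \<and> A x y \<and> p y < p x \<and> P x y}"

lemma bset_fin: "finite V \<Longrightarrow> finite (bset V A p P)"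
  by (rule finite_subset[of _ "V \<times> V"]) (auto simp: bset_def)

lemma min_local:
  assumes T: "tournament V A" and v: "v \<in> V"
    and inj: "inj_on p V"
    and min: "\<And>q. inj_on q V \<Longrightarrow> card (bset V A p (\<lambda>x y. True)) \<le> card (bset V A q (\<lambda>x y. True))"
  shows "card (bset V A p (\<lambda>x y. x = v \<or> y = v)) \<le> in_degree V A v"
proof -
  have fin: "finite V" using T unfolding tournament_def by blast
  define q where "q = (\<lambda>x. if x = v then 0 else Suc (p x))"
  have injq: "inj_on q V" using inj unfolding q_def inj_on_def by auto
  have split: "card (bset V A r (\<lambda>x y. True)) =
      card (bset V A r (\<lambda>x y. x = v \<or> y = v)) + card (bset V A r (\<lambda>x y. \<not> (x = v \<or> y = v)))" for r
  proof -
    have U: "bset V A r (\<lambda>x y. True) = bset V A r (\<lambda>x y. x = v \<or> y = v) \<union> bset V A r (\<lambda>x y. \<not> (x = v \<or> y = v))"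
      unfolding bset_def by auto
    have D: "bset V A r (\<lambda>x y. x = v \<or> y = v) \<inter> bset V A r (\<lambda>x y. \<not> (x = v \<or> y = v)) = {}"
      unfolding bset_def by auto
    show ?thesis unfolding U by (rule card_Un_disjoint[OF bset_fin[OF fin] bset_fin[OF fin] D])
  qed
  have N: "bset V A q (\<lambda>x y. \<not> (x = v \<or> y = v)) = bset V A p (\<lambda>x y. \<not> (x = v \<or> y = v))"
    unfolding bset_def q_def by auto
  have Sv: "bset V A q (\<lambda>x y. x = v \<or> y = v) = (\<lambda>x. (x, v)) ` {w \<in> V. A w v}"
  proof -
    have arcs1: "\<forall>u w. A u w \<longrightarrow> u \<in> V \<and> w \<in> V" using T unfolding tournament_def by blast
    have arcs2: "\<not> A v v" using T unfolding tournament_def by blast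
    note arcs = arcs1 arcs2
    show ?thesis unfolding bset_def q_def using arcs v by auto
  qed
  have cSv: "card (bset V A q (\<lambda>x y. x = v \<or> y = v)) = in_degree V A v"
    unfolding Sv in_degree_def by (rule card_image) (auto simp: inj_on_def)
  have cN: "card (bset V A q (\<lambda>x y. \<not> (x = v \<or> y = v))) = card (bset V A p (\<lambda>x y. \<not> (x = v \<or> y = v)))"
    using N by simp
  show ?thesis using min[OF injq] split[of p] split[of q] cN cSv by linarith
qed

theorem mainTheorem1:
  fixes V :: "'a set" and A :: "'a \<Rightarrow> 'a \<Rightarrow> bool" and k :: nat
  assumes "tournament V A"
    and "card V = 2 * k + 1"
    and "\<forall>v\<in>V. in_degree V A v = k \<and> out_degree V A v = k"
  shows "degreewidth V A = k \<and>
    (\<forall>\<sigma>. is_ordering V \<sigma> \<longrightarrow>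
       back_deg V A \<sigma> (hd \<sigma>) = k \<and> back_deg V A \<sigma> (last \<sigma>) = k)"
proof -
  have fin: "finite V" using assms(1) unfolding tournament_def by blast
  have ne: "V \<noteq> {}" using assms(2) by auto
  have ends: "back_deg V A \<sigma> (hd \<sigma>) = k \<and> back_deg V A \<sigma> (last \<sigma>) = k" if o: "is_ordering V \<sigma>" for \<sigma>
  proof -
    note op = ordering_props[OF o ne]
    have "hd \<sigma> \<in> V" "last \<sigma> \<in> V" using op by auto
    then show ?thesis using hd_back[OF assms(1) o ne] last_back[OF assms(1) o ne] assms(3) by auto
  qed
  have ge: "k \<le> max_back_deg V A \<sigma>" if o: "is_ordering V \<sigma>" for \<sigma>
  proof -
    note op = ordering_props[OF o ne]
    have "hd \<sigma> \<in> V" using op by auto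
    then have "back_deg V A \<sigma> (hd \<sigma>) \<le> max_back_deg V A \<sigma>"
      unfolding max_back_deg_def using fin by (intro Max_ge) auto
    then show ?thesis using ends[OF o] by simp
  qed
  obtain p0 :: "'a \<Rightarrow> nat" and n where "p0 ` V = {i. i < n}" "inj_on p0 V"
    using finite_imp_inj_to_nat_seg[OF fin] by blast
  then obtain p :: "'a \<Rightarrow> nat" where inj: "inj_on p V"
    and min: "\<And>q. inj_on q V \<Longrightarrow> card (bset V A p (\<lambda>x y. True)) \<le> card (bset V A q (\<lambda>x y. True))"
    using ex_has_least_nat[of "\<lambda>p. inj_on p V" p0 "\<lambda>p. card (bset V A p (\<lambda>x y. True))"] by blast
  obtain \<sigma> where o: "is_ordering V \<sigma>"
    and bw: "\<forall>x\<in>V. \<forall>y\<in>V. backward A \<sigma> x y \<longleftrightarrow> A x y \<and> p y < p x"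
    using sorted_ordering[OF fin inj, of A] by blast
  have le: "back_deg V A \<sigma> v \<le> k" if v: "v \<in> V" for v
  proof -
    have "back_deg V A \<sigma> v = card (bset V A p (\<lambda>x y. x = v \<or> y = v))"
      unfolding back_deg_def bset_def
      by (rule arg_cong[where f = card]) (use bw in auto)
    then show ?thesis using min_local[OF assms(1) v inj min] assms(3) v by auto
  qed
  have mk: "max_back_deg V A \<sigma> = k"
  proof -
    have "max_back_deg V A \<sigma> \<le> k" unfolding max_back_deg_def
      using fin ne le by (subst Max_le_iff) auto
    then show ?thesis using ge[OF o] by simp
  qed
  have finS: "finite {max_back_deg V A \<sigma> | \<sigma>. is_ordering V \<sigma>}"
  proof -
    have "{\<sigma>. is_ordering V \<sigma>} \<subseteq> {xs. set xs \<subseteq> V \<and> length xs \<le> card V}"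
      unfolding is_ordering_def using distinct_card by fastforce
    then have "finite {\<sigma>. is_ordering V \<sigma>}"
      using finite_subset finite_lists_length_le[OF fin] by blast
    then have "finite ((max_back_deg V A) ` {\<sigma>. is_ordering V \<sigma>})" by simp
    moreover have "{max_back_deg V A \<sigma> | \<sigma>. is_ordering V \<sigma>} = (max_back_deg V A) ` {\<sigma>. is_ordering V \<sigma>}"
      by auto
    ultimately show ?thesis by simp
  qed
  have "degreewidth V A = k" unfolding degreewidth_def
    by (rule Min_eqI[OF finS]) (use ge o mk in auto)
  then show ?thesis using ends by blast
qed

end
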